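(* Let $f:K\to M$ and $g:L\to M$ be group homomorphisms with $f(K)\subseteq g(L)$, let $K\times_ML=\{(k,l)\in K\times L: f(k)=g(l)\}$, $B=\mathrm{Ker}(g)$, and $\iota:B\to K\times_ML$, $\iota(l)=(1_K,l)$. Let $\mathrm{Hom}^f_g(K,L)$ be the set of group homomorphisms $h:K\to L$ with $g\circ h=f$; $B$ acts on it by $h\mapsto l_0hl_0^{-1}$ ($k\mapsto l_0h(k)l_0^{-1}$), and let $\overline{\mathrm{Hom}}^f_g(K,L)$ denote the quotient. For $h\in\mathrm{Hom}^f_g(K,L)$ define $q_h:K\times_ML\to B$ by $q_h(k,l)=l\,h(k)^{-1}$. Then $h\mapsto q_h$ is a bijection from $\mathrm{Hom}^f_g(K,L)$ onto $\mathcal Z^1(\mathsf T^l_\iota,(B,m_B))$, and it induces a bijection $\overline{\mathrm{Hom}}^f_g(K,L)\to\mathsf{Desc}^1(\mathsf T^l_\iota,(B,m_B))$.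
   Context: For an injective group homomorphism $\iota:B\to A$, $\mathcal Z^1(\mathsf T^l_\iota,(B,m_B))$ is identified with the set of maps $q:A\to B$ satisfying (ZL1) $q(1_A)=1_B$; (ZL2) $q(\iota(b)a)=b\,q(a)$ for all $a\in A,b\in B$; (ZL3) $q(aa')=q(a\,\iota(q(a')))$ for all $a,a'\in A$ (the algebra structures on the left $B$-set $B$ for the monad $A\otimes_B-$ on left $B$-sets induced by $\iota$). $\mathsf{Desc}^1(\mathsf T^l_\iota,(B,m_B))$ is its quotient by the relation $q\sim q'$ iff there is $b_0\in B$ with $q(a)b_0=q'(a\,\iota(b_0))$ for all $a\in A$. *)

theory Defs
  imports "HOL-Algebra.Algebra"
begin

definition fibre_prod ::
  "('k,'x) monoid_scheme \<Rightarrow> ('l,'y) monoid_scheme \<Rightarrow> ('m,'z) monoid_scheme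
   \<Rightarrow> ('k \<Rightarrow> 'm) \<Rightarrow> ('l \<Rightarrow> 'm) \<Rightarrow> ('k \<times> 'l) monoid" where
  "fibre_prod K L M f g =
     \<lparr> carrier = {(k, l). k \<in> carrier K \<and> l \<in> carrier L \<and> f k = g l},
       monoid.mult = (\<lambda>p p'. (fst p \<otimes>\<^bsub>K\<^esub> fst p', snd p \<otimes>\<^bsub>L\<^esub> snd p')),
       monoid.one = (\<one>\<^bsub>K\<^esub>, \<one>\<^bsub>L\<^esub>) \<rparr>"

definition ker_group ::
  "('l,'y) monoid_scheme \<Rightarrow> ('m,'z) monoid_scheme \<Rightarrow> ('l \<Rightarrow> 'm) \<Rightarrow> ('l,'y) monoid_scheme" where
  "ker_group L M g = L\<lparr>carrier := kernel L M g\<rparr>"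

definition iota_fp :: "('k,'x) monoid_scheme \<Rightarrow> 'l \<Rightarrow> 'k \<times> 'l" where
  "iota_fp K l = (\<one>\<^bsub>K\<^esub>, l)"

text \<open>Z^1(T^l_iota,(B,m_B)): maps q : A -> B (extensional on carrier A) satisfying ZL1--ZL3.\<close>
definition Z1 ::
  "('a,'x) monoid_scheme \<Rightarrow> ('b,'y) monoid_scheme \<Rightarrow> ('b \<Rightarrow> 'a) \<Rightarrow> ('a \<Rightarrow> 'b) set" where
  "Z1 A B \<iota> = {q. q \<in> carrier A \<rightarrow>\<^sub>E carrier B
      \<and> q \<one>\<^bsub>A\<^esub> = \<one>\<^bsub>B\<^esub>
      \<and> (\<forall>a\<in>carrier A. \<forall>b\<in>carrier B. q (\<iota> b \<otimes>\<^bsub>A\<^esub> a) = b \<otimes>\<^bsub>B\<^esub> q a)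
      \<and> (\<forall>a\<in>carrier A. \<forall>a'\<in>carrier A. q (a \<otimes>\<^bsub>A\<^esub> a') = q (a \<otimes>\<^bsub>A\<^esub> \<iota> (q a')))}"

definition desc_rel ::
  "('a,'x) monoid_scheme \<Rightarrow> ('b,'y) monoid_scheme \<Rightarrow> ('b \<Rightarrow> 'a) \<Rightarrow> (('a \<Rightarrow> 'b) \<times> ('a \<Rightarrow> 'b)) set" where
  "desc_rel A B \<iota> = {(q, q'). q \<in> Z1 A B \<iota> \<and> q' \<in> Z1 A B \<iota> \<and>
      (\<exists>b0\<in>carrier B. \<forall>a\<in>carrier A. q a \<otimes>\<^bsub>B\<^esub> b0 = q' (a \<otimes>\<^bsub>A\<^esub> \<iota> b0))}"

definition Desc1 ::
  "('a,'x) monoid_scheme \<Rightarrow> ('b,'y) monoid_scheme \<Rightarrow> ('b \<Rightarrow> 'a) \<Rightarrow> ('a \<Rightarrow> 'b) set set" where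
  "Desc1 A B \<iota> = Z1 A B \<iota> // desc_rel A B \<iota>"

definition Hom_fg ::
  "('k,'x) monoid_scheme \<Rightarrow> ('l,'y) monoid_scheme \<Rightarrow> ('k \<Rightarrow> 'm) \<Rightarrow> ('l \<Rightarrow> 'm) \<Rightarrow> ('k \<Rightarrow> 'l) set" where
  "Hom_fg K L f g = {h. h \<in> hom K L \<and> h \<in> extensional (carrier K)
      \<and> (\<forall>k\<in>carrier K. g (h k) = f k)}"

definition conj_rel ::
  "('k,'x) monoid_scheme \<Rightarrow> ('l,'y) monoid_scheme \<Rightarrow> ('m,'z) monoid_scheme
   \<Rightarrow> ('k \<Rightarrow> 'm) \<Rightarrow> ('l \<Rightarrow> 'm) \<Rightarrow> (('k \<Rightarrow> 'l) \<times> ('k \<Rightarrow> 'l)) set" where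
  "conj_rel K L M f g = {(h, h'). h \<in> Hom_fg K L f g \<and> h' \<in> Hom_fg K L f g \<and>
      (\<exists>l0\<in>kernel L M g. h' = (\<lambda>k\<in>carrier K. l0 \<otimes>\<^bsub>L\<^esub> h k \<otimes>\<^bsub>L\<^esub> inv\<^bsub>L\<^esub> l0))}"

definition Hom_bar ::
  "('k,'x) monoid_scheme \<Rightarrow> ('l,'y) monoid_scheme \<Rightarrow> ('m,'z) monoid_scheme
   \<Rightarrow> ('k \<Rightarrow> 'm) \<Rightarrow> ('l \<Rightarrow> 'm) \<Rightarrow> ('k \<Rightarrow> 'l) set set" where
  "Hom_bar K L M f g = Hom_fg K L f g // conj_rel K L M f g"

definition q_of ::
  "('k,'x) monoid_scheme \<Rightarrow> ('l,'y) monoid_scheme \<Rightarrow> ('m,'z) monoid_scheme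
   \<Rightarrow> ('k \<Rightarrow> 'm) \<Rightarrow> ('l \<Rightarrow> 'm) \<Rightarrow> ('k \<Rightarrow> 'l) \<Rightarrow> ('k \<times> 'l \<Rightarrow> 'l)" where
  "q_of K L M f g h = (\<lambda>p\<in>carrier (fibre_prod K L M f g).
      snd p \<otimes>\<^bsub>L\<^esub> inv\<^bsub>L\<^esub> (h (fst p)))"

end

theory Submission
  imports Defs
begin

lemma quot_bij:
  assumes bij: "bij_betw \<phi> A B" and eq: "equiv A R" and S: "S \<subseteq> B \<times> B"
    and corr: "\<forall>x\<in>A. \<forall>y\<in>A. (x,y)\<in>R \<longleftrightarrow> (\<phi> x, \<phi> y) \<in> S"
  shows "bij_betw (\<lambda>C. S``(\<phi>`C)) (A//R) (B//S)"
proof -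
  have RA: "R \<subseteq> A \<times> A" using eq by (simp add: equiv_def refl_on_def)
  have imgB: "\<phi> ` A = B" using bij by (simp add: bij_betw_def)
  have injA: "inj_on \<phi> A" using bij by (simp add: bij_betw_def)
  have refl: "x \<in> A \<Longrightarrow> (x,x) \<in> R" for x using eq by (simp add: equiv_def refl_on_def)
  have transR: "trans R" using eq by (simp add: equiv_def)
  have c1: "S``{\<phi> x} = \<phi>`(R``{x})" if x: "x \<in> A" for x
  proof
    show "\<phi>`(R``{x}) \<subseteq> S``{\<phi> x}" using RA corr x by blast
    show "S``{\<phi> x} \<subseteq> \<phi>`(R``{x})"
    proof
      fix b assume "b \<in> S``{\<phi> x}"
      then have b: "(\<phi> x, b) \<in> S" by simp
      then have "b \<in> B" using S by blast
      then obtain y where y: "y \<in> A" "b = \<phi> y" using imgB by blast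
      then have "(x,y) \<in> R" using corr x b by blast
      then show "b \<in> \<phi>`(R``{x})" using y by blast
    qed
  qed
  have c2: "S``(S``{\<phi> x}) = S``{\<phi> x}" if x: "x \<in> A" for x
  proof
    show "S``{\<phi> x} \<subseteq> S``(S``{\<phi> x})" using refl[OF x] corr x by blast
    show "S``(S``{\<phi> x}) \<subseteq> S``{\<phi> x}"
    proof
      fix c assume "c \<in> S``(S``{\<phi> x})"
      then obtain b where b: "(\<phi> x, b) \<in> S" "(b,c) \<in> S" by blast
      then have "b \<in> B" "c \<in> B" using S by blast+
      then obtain y z where y: "y \<in> A" "b = \<phi> y" and z: "z \<in> A" "c = \<phi> z" using imgB by blast
      have "(x,y) \<in> R" "(y,z) \<in> R" using corr x y z b by auto
      then have "(x,z) \<in> R" using transR by (meson transD)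
      then show "c \<in> S``{\<phi> x}" using corr x z by auto
    qed
  qed
  have val: "S``(\<phi>`(R``{x})) = S``{\<phi> x}" if "x \<in> A" for x
    using c1[OF that] c2[OF that] by simp
  show ?thesis
    unfolding bij_betw_def
  proof
    show "inj_on (\<lambda>C. S``(\<phi>`C)) (A//R)"
    proof (rule inj_onI)
      fix C1 C2 assume C: "C1 \<in> A//R" and D: "C2 \<in> A//R" and e: "S``(\<phi>`C1) = S``(\<phi>`C2)"
      obtain x where x: "x \<in> A" "C1 = R``{x}" using C by (auto elim: quotientE)
      obtain y where y: "y \<in> A" "C2 = R``{y}" using D by (auto elim: quotientE)
      have "S``{\<phi> x} = S``{\<phi> y}" using e x y val by simp
      then have "\<phi> y \<in> S``{\<phi> x}" using refl[OF y(1)] corr y(1) by auto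
      then have "(x,y) \<in> R" using corr x y by auto
      then show "C1 = C2" using x y eq by (simp add: equiv_class_eq)
    qed
    show "(\<lambda>C. S``(\<phi>`C)) ` (A//R) = B//S"
    proof
      show "(\<lambda>C. S``(\<phi>`C)) ` (A//R) \<subseteq> B//S"
      proof
        fix Q1 assume "Q1 \<in> (\<lambda>C. S``(\<phi>`C)) ` (A//R)"
        then obtain x where x: "x \<in> A" "Q1 = S``(\<phi>`(R``{x}))" by (auto elim!: quotientE)
        then show "Q1 \<in> B//S" using val imgB by (auto intro!: quotientI)
      qed
      show "B//S \<subseteq> (\<lambda>C. S``(\<phi>`C)) ` (A//R)"
      proof
        fix Q1 assume "Q1 \<in> B//S"
        then obtain b where b: "b \<in> B" "Q1 = S``{b}" by (auto elim: quotientE)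
        then obtain x where x: "x \<in> A" "b = \<phi> x" using imgB by blast
        then have "Q1 = (\<lambda>C. S``(\<phi>`C)) (R``{x})" using val b by simp
        then show "Q1 \<in> (\<lambda>C. S``(\<phi>`C)) ` (A//R)" using x by (auto intro: quotientI)
      qed
    qed
  qed
qed


locale fpctx =
  K: group K + L: group L + M: group M
  for K :: "('k,'x) monoid_scheme" and L :: "('l,'y) monoid_scheme"
    and M :: "('m,'z) monoid_scheme" +
  fixes f :: "'k \<Rightarrow> 'm" and g :: "'l \<Rightarrow> 'm"
  assumes fh: "f \<in> hom K M" and gh: "g \<in> hom L M"
    and cov: "f ` carrier K \<subseteq> g ` carrier L"
begin

abbreviation "AA \<equiv> fibre_prod K L M f g"
abbreviation "BB \<equiv> ker_group L M g"

lemma A_carrier[simp]: "(p \<in> carrier AA) \<longleftrightarrow> fst p \<in> carrier K \<and> snd p \<in> carrier L \<and> f (fst p) = g (snd p)"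
  by (cases p) (simp add: fibre_prod_def)
lemma A_mult[simp]: "p \<otimes>\<^bsub>AA\<^esub> p' = (fst p \<otimes>\<^bsub>K\<^esub> fst p', snd p \<otimes>\<^bsub>L\<^esub> snd p')"
  by (simp add: fibre_prod_def)
lemma A_one[simp]: "\<one>\<^bsub>AA\<^esub> = (\<one>\<^bsub>K\<^esub>, \<one>\<^bsub>L\<^esub>)"
  by (simp add: fibre_prod_def)
lemma B_carrier[simp]: "(b \<in> carrier BB) \<longleftrightarrow> b \<in> carrier L \<and> g b = \<one>\<^bsub>M\<^esub>"
  by (simp add: ker_group_def kernel_def)
lemma B_mult[simp]: "b \<otimes>\<^bsub>BB\<^esub> b' = b \<otimes>\<^bsub>L\<^esub> b'"
  by (simp add: ker_group_def)
lemma B_one[simp]: "\<one>\<^bsub>BB\<^esub> = \<one>\<^bsub>L\<^esub>"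
  by (simp add: ker_group_def)
lemma kernel_iff[simp]: "(b \<in> kernel L M g) \<longleftrightarrow> b \<in> carrier L \<and> g b = \<one>\<^bsub>M\<^esub>"
  by (simp add: kernel_def)
lemma iota[simp]: "iota_fp K b = (\<one>\<^bsub>K\<^esub>, b)"
  by (simp add: iota_fp_def)

lemma g_mult[simp]: "x \<in> carrier L \<Longrightarrow> y \<in> carrier L \<Longrightarrow> g (x \<otimes>\<^bsub>L\<^esub> y) = g x \<otimes>\<^bsub>M\<^esub> g y"
  using gh by (simp add: hom_def)
lemma g_car[simp]: "x \<in> carrier L \<Longrightarrow> g x \<in> carrier M"
  using gh by (auto simp add: hom_def)
lemma f_mult[simp]: "x \<in> carrier K \<Longrightarrow> y \<in> carrier K \<Longrightarrow> f (x \<otimes>\<^bsub>K\<^esub> y) = f x \<otimes>\<^bsub>M\<^esub> f y"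
  using fh by (simp add: hom_def)
lemma f_car[simp]: "x \<in> carrier K \<Longrightarrow> f x \<in> carrier M"
  using fh by (auto simp add: hom_def)
lemma g_inv[simp]: "x \<in> carrier L \<Longrightarrow> g (inv\<^bsub>L\<^esub> x) = inv\<^bsub>M\<^esub> g x"
  using gh by (simp add: group_hom.hom_inv group_hom_axioms_def group_hom_def)
lemma g_one[simp]: "g \<one>\<^bsub>L\<^esub> = \<one>\<^bsub>M\<^esub>"
  using gh by (simp add: group_hom.hom_one group_hom_axioms_def group_hom_def)
lemma f_one[simp]: "f \<one>\<^bsub>K\<^esub> = \<one>\<^bsub>M\<^esub>"
  using fh by (simp add: group_hom.hom_one group_hom_axioms_def group_hom_def)

lemma Lc1[simp]: "x \<in> carrier L \<Longrightarrow> y \<in> carrier L \<Longrightarrow> x \<otimes>\<^bsub>L\<^esub> (inv\<^bsub>L\<^esub> x \<otimes>\<^bsub>L\<^esub> y) = y"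
  by (simp add: L.m_assoc[symmetric])
lemma Lc2[simp]: "x \<in> carrier L \<Longrightarrow> y \<in> carrier L \<Longrightarrow> inv\<^bsub>L\<^esub> x \<otimes>\<^bsub>L\<^esub> (x \<otimes>\<^bsub>L\<^esub> y) = y"
  by (simp add: L.m_assoc[symmetric])

lemma ex_l: "k \<in> carrier K \<Longrightarrow> \<exists>l\<in>carrier L. g l = f k"
  using cov by (metis image_iff subsetD)

lemma hom_props:
  assumes "h \<in> Hom_fg K L f g"
  shows "\<And>k. k \<in> carrier K \<Longrightarrow> h k \<in> carrier L"
    and "\<And>k. k \<in> carrier K \<Longrightarrow> g (h k) = f k"
    and "\<And>k k'. k \<in> carrier K \<Longrightarrow> k' \<in> carrier K \<Longrightarrow> h (k \<otimes>\<^bsub>K\<^esub> k') = h k \<otimes>\<^bsub>L\<^esub> h k'"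
    and "h \<in> extensional (carrier K)"
  using assms by (auto simp: Hom_fg_def hom_def)

lemma q_val: "(k,l) \<in> carrier AA \<Longrightarrow> q_of K L M f g h (k,l) = l \<otimes>\<^bsub>L\<^esub> inv\<^bsub>L\<^esub> (h k)"
  unfolding q_of_def by (simp del: A_carrier)


lemma q_in_Z:
  assumes h: "h \<in> Hom_fg K L f g"
  shows "q_of K L M f g h \<in> Z1 AA BB (iota_fp K)"
proof -
  note hp = hom_props[OF h]
  let ?q = "q_of K L M f g h"
  have car: "?q \<in> carrier AA \<rightarrow>\<^sub>E carrier BB"
  proof
    fix p assume p: "p \<in> carrier AA"
    obtain k l where kl: "p = (k,l)" by (cases p)
    have k: "k \<in> carrier K" and l: "l \<in> carrier L" and e: "f k = g l" using p kl by auto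
    show "?q p \<in> carrier BB" using hp(1,2)[OF k] k l e kl p
      by (simp add: q_val M.r_inv del: A_carrier)
  next
    fix p assume "p \<notin> carrier AA" then show "?q p = undefined" by (simp add: q_of_def del: A_carrier)
  qed
  have one: "?q \<one>\<^bsub>AA\<^esub> = \<one>\<^bsub>BB\<^esub>"
  proof -
    have "h \<one>\<^bsub>K\<^esub> = \<one>\<^bsub>L\<^esub>" using h by (auto simp: Hom_fg_def intro: group_hom.hom_one group_hom_axioms.intro group_hom.intro)
    then show ?thesis by (simp add: q_of_def)
  qed
  have zl2: "\<forall>a\<in>carrier AA. \<forall>b\<in>carrier BB. ?q (iota_fp K b \<otimes>\<^bsub>AA\<^esub> a) = b \<otimes>\<^bsub>BB\<^esub> ?q a"
  proof (intro ballI)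
    fix a b assume a: "a \<in> carrier AA" and b: "b \<in> carrier BB"
    obtain k l where kl: "a = (k,l)" by (cases a)
    have k: "k \<in> carrier K" and l: "l \<in> carrier L" and e: "f k = g l" using a kl by auto
    have bb: "b \<in> carrier L" "g b = \<one>\<^bsub>M\<^esub>" using b by auto
    have "iota_fp K b \<otimes>\<^bsub>AA\<^esub> a = (k, b \<otimes>\<^bsub>L\<^esub> l)" using kl k by simp
    moreover have "(k, b \<otimes>\<^bsub>L\<^esub> l) \<in> carrier AA" using k l bb e by simp
    ultimately show "?q (iota_fp K b \<otimes>\<^bsub>AA\<^esub> a) = b \<otimes>\<^bsub>BB\<^esub> ?q a"
      using a kl hp(1)[OF k] bb l by (simp add: q_val L.m_assoc del: A_carrier)
  qed
  have zl3: "\<forall>a\<in>carrier AA. \<forall>a'\<in>carrier AA. ?q (a \<otimes>\<^bsub>AA\<^esub> a') = ?q (a \<otimes>\<^bsub>AA\<^esub> iota_fp K (?q a'))"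
  proof (intro ballI)
    fix a a' assume a: "a \<in> carrier AA" and a': "a' \<in> carrier AA"
    obtain k l where kl: "a = (k,l)" by (cases a)
    obtain k' l' where kl': "a' = (k',l')" by (cases a')
    have k: "k \<in> carrier K" and l: "l \<in> carrier L" and e: "f k = g l" using a kl by auto
    have k': "k' \<in> carrier K" and l': "l' \<in> carrier L" and e': "f k' = g l'" using a' kl' by auto
    have hk: "h k \<in> carrier L" "h k' \<in> carrier L" using hp(1) k k' by auto
    have c: "?q a' = l' \<otimes>\<^bsub>L\<^esub> inv\<^bsub>L\<^esub> h k'" using a' kl' by (simp add: q_val del: A_carrier)
    have m1: "a \<otimes>\<^bsub>AA\<^esub> a' = (k \<otimes>\<^bsub>K\<^esub> k', l \<otimes>\<^bsub>L\<^esub> l')" using kl kl' by simp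
    have m1c: "(k \<otimes>\<^bsub>K\<^esub> k', l \<otimes>\<^bsub>L\<^esub> l') \<in> carrier AA" using k l k' l' e e' by simp
    have m2: "a \<otimes>\<^bsub>AA\<^esub> iota_fp K (?q a') = (k, l \<otimes>\<^bsub>L\<^esub> (l' \<otimes>\<^bsub>L\<^esub> inv\<^bsub>L\<^esub> h k'))" using kl k c by simp
    have m2c: "(k, l \<otimes>\<^bsub>L\<^esub> (l' \<otimes>\<^bsub>L\<^esub> inv\<^bsub>L\<^esub> h k')) \<in> carrier AA"
      using k l k' l' e e' hk hp(2)[OF k'] by (simp add: M.r_inv)
    show "?q (a \<otimes>\<^bsub>AA\<^esub> a') = ?q (a \<otimes>\<^bsub>AA\<^esub> iota_fp K (?q a'))"
      unfolding m1 m2 using m1c m2c hk k k' l l' hp(3)[OF k k']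
      by (simp add: q_val L.m_assoc L.inv_mult_group del: A_carrier)
  qed
  show ?thesis unfolding Z1_def using car one zl2 zl3 by blast
qed


lemma q_inj: "inj_on (q_of K L M f g) (Hom_fg K L f g)"
proof (rule inj_onI)
  fix h h' assume h: "h \<in> Hom_fg K L f g" and h': "h' \<in> Hom_fg K L f g"
    and e: "q_of K L M f g h = q_of K L M f g h'"
  show "h = h'"
  proof (rule extensionalityI[OF hom_props(4)[OF h] hom_props(4)[OF h']])
    fix k assume k: "k \<in> carrier K"
    obtain l where l: "l \<in> carrier L" "g l = f k" using ex_l[OF k] by blast
    have kl: "(k,l) \<in> carrier AA" using k l by simp
    have "l \<otimes>\<^bsub>L\<^esub> inv\<^bsub>L\<^esub> (h k) = q_of K L M f g h (k,l)" by (rule q_val[symmetric, OF kl])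
    also have "\<dots> = q_of K L M f g h' (k,l)" using e by simp
    also have "\<dots> = l \<otimes>\<^bsub>L\<^esub> inv\<^bsub>L\<^esub> (h' k)" by (rule q_val[OF kl])
    finally have ee: "l \<otimes>\<^bsub>L\<^esub> inv\<^bsub>L\<^esub> (h k) = l \<otimes>\<^bsub>L\<^esub> inv\<^bsub>L\<^esub> (h' k)" .
    have "inv\<^bsub>L\<^esub> (h k) = inv\<^bsub>L\<^esub> (h' k)"
      by (rule L.l_cancel[OF ee _ _ l(1)]) (use hom_props(1)[OF h k] hom_props(1)[OF h' k] in auto)
    then show "h k = h' k" using hom_props(1)[OF h k] hom_props(1)[OF h' k] by (metis L.inv_inv)
  qed
qed

lemma Z_props:
  assumes q: "q \<in> Z1 AA BB (iota_fp K)"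
  shows "\<And>p. p \<in> carrier AA \<Longrightarrow> q p \<in> carrier L \<and> g (q p) = \<one>\<^bsub>M\<^esub>"
    and "\<And>p. p \<notin> carrier AA \<Longrightarrow> q p = undefined"
    and "\<And>a b. a\<in>carrier AA \<Longrightarrow> b\<in>carrier BB \<Longrightarrow> q (iota_fp K b \<otimes>\<^bsub>AA\<^esub> a) = b \<otimes>\<^bsub>BB\<^esub> q a"
    and "\<And>a a'. a\<in>carrier AA \<Longrightarrow> a'\<in>carrier AA \<Longrightarrow> q (a \<otimes>\<^bsub>AA\<^esub> a') = q (a \<otimes>\<^bsub>AA\<^esub> iota_fp K (q a'))"
proof -
  have Z: "q \<in> carrier AA \<rightarrow>\<^sub>E carrier BB"
    "\<forall>a\<in>carrier AA. \<forall>b\<in>carrier BB. q (iota_fp K b \<otimes>\<^bsub>AA\<^esub> a) = b \<otimes>\<^bsub>BB\<^esub> q a"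
    "\<forall>a\<in>carrier AA. \<forall>a'\<in>carrier AA. q (a \<otimes>\<^bsub>AA\<^esub> a') = q (a \<otimes>\<^bsub>AA\<^esub> iota_fp K (q a'))"
  proof -
    have Zc: "q \<in> carrier AA \<rightarrow>\<^sub>E carrier BB
      \<and> q \<one>\<^bsub>AA\<^esub> = \<one>\<^bsub>BB\<^esub>
      \<and> (\<forall>a\<in>carrier AA. \<forall>b\<in>carrier BB. q (iota_fp K b \<otimes>\<^bsub>AA\<^esub> a) = b \<otimes>\<^bsub>BB\<^esub> q a)
      \<and> (\<forall>a\<in>carrier AA. \<forall>a'\<in>carrier AA. q (a \<otimes>\<^bsub>AA\<^esub> a') = q (a \<otimes>\<^bsub>AA\<^esub> iota_fp K (q a')))"
      using q unfolding Z1_def by (rule CollectD)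
    show "q \<in> carrier AA \<rightarrow>\<^sub>E carrier BB" by (rule conjunct1[OF Zc])
    show "\<forall>a\<in>carrier AA. \<forall>b\<in>carrier BB. q (iota_fp K b \<otimes>\<^bsub>AA\<^esub> a) = b \<otimes>\<^bsub>BB\<^esub> q a"
      by (rule conjunct1[OF conjunct2[OF conjunct2[OF Zc]]])
    show "\<forall>a\<in>carrier AA. \<forall>a'\<in>carrier AA. q (a \<otimes>\<^bsub>AA\<^esub> a') = q (a \<otimes>\<^bsub>AA\<^esub> iota_fp K (q a'))"
      by (rule conjunct2[OF conjunct2[OF conjunct2[OF Zc]]])
  qed
  show "\<And>p. p \<in> carrier AA \<Longrightarrow> q p \<in> carrier L \<and> g (q p) = \<one>\<^bsub>M\<^esub>"
  proof -
    fix p assume p: "p \<in> carrier AA"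
    have "q p \<in> carrier BB" using Z(1) p by (rule PiE_mem)
    then show "q p \<in> carrier L \<and> g (q p) = \<one>\<^bsub>M\<^esub>" by simp
  qed
  show "\<And>p. p \<notin> carrier AA \<Longrightarrow> q p = undefined" using Z(1) by (meson PiE_arb)
  show "q (iota_fp K b \<otimes>\<^bsub>AA\<^esub> a) = b \<otimes>\<^bsub>BB\<^esub> q a" if "a\<in>carrier AA" "b\<in>carrier BB" for a b
    by (rule bspec[OF bspec[OF Z(2) that(1)] that(2)])
  show "q (a \<otimes>\<^bsub>AA\<^esub> a') = q (a \<otimes>\<^bsub>AA\<^esub> iota_fp K (q a'))" if "a\<in>carrier AA" "a'\<in>carrier AA" for a a'
    by (rule bspec[OF bspec[OF Z(3) that(1)] that(2)])
qed

lemma wd: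
  assumes q: "q \<in> Z1 AA BB (iota_fp K)"
    and a: "(k,l) \<in> carrier AA" and a': "(k,l') \<in> carrier AA"
  shows "inv\<^bsub>L\<^esub> (q (k,l)) \<otimes>\<^bsub>L\<^esub> l = inv\<^bsub>L\<^esub> (q (k,l')) \<otimes>\<^bsub>L\<^esub> l'"
proof -
  have k: "k \<in> carrier K" and l: "l \<in> carrier L" "l' \<in> carrier L" and e: "g l = g l'" using a a' by auto
  define b where "b = l' \<otimes>\<^bsub>L\<^esub> inv\<^bsub>L\<^esub> l"
  have bL: "b \<in> carrier L" using l b_def by simp
  have gl: "g l \<in> carrier M" using l by simp
  have bB: "b \<in> carrier BB" using l e gl by (simp add: b_def M.r_inv)
  have "iota_fp K b \<otimes>\<^bsub>AA\<^esub> (k,l) = (k, l')" using k l by (simp add: b_def L.m_assoc)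
  then have qe: "q (k,l') = b \<otimes>\<^bsub>L\<^esub> q (k,l)" using Z_props(3)[OF q a bB] by simp
  have ql: "q (k,l) \<in> carrier L" using Z_props(1)[OF q a] by simp
  show ?thesis unfolding qe using ql l bL
    by (simp add: L.inv_mult_group L.m_assoc b_def)
qed


lemma q_surj:
  assumes q: "q \<in> Z1 AA BB (iota_fp K)"
  shows "\<exists>h\<in>Hom_fg K L f g. q_of K L M f g h = q"
proof -
  define lk where "lk k = (SOME l. l \<in> carrier L \<and> g l = f k)" for k
  have lk: "lk k \<in> carrier L \<and> g (lk k) = f k" if "k \<in> carrier K" for k
    unfolding lk_def using ex_l[OF that] by (rule someI2_bex) auto
  define h where "h = (\<lambda>k\<in>carrier K. inv\<^bsub>L\<^esub> (q (k, lk k)) \<otimes>\<^bsub>L\<^esub> lk k)"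
  have qc: "q p \<in> carrier L" "g (q p) = \<one>\<^bsub>M\<^esub>" if "p \<in> carrier AA" for p
    using Z_props(1)[OF q that] by auto
  have hv: "h k = inv\<^bsub>L\<^esub> (q (k,l)) \<otimes>\<^bsub>L\<^esub> l" if a: "(k,l) \<in> carrier AA" for k l
  proof -
    have k: "k \<in> carrier K" using a by simp
    have a0: "(k, lk k) \<in> carrier AA" using lk[OF k] k by simp
    show ?thesis using wd[OF q a0 a] k by (simp add: h_def)
  qed
  have hL: "h k \<in> carrier L" "g (h k) = f k" if k: "k \<in> carrier K" for k
  proof -
    have a: "(k, lk k) \<in> carrier AA" using lk[OF k] k by simp
    show "h k \<in> carrier L" using hv[OF a] qc[OF a] lk[OF k] by simp
    have "g (h k) = inv\<^bsub>M\<^esub> \<one>\<^bsub>M\<^esub> \<otimes>\<^bsub>M\<^esub> f k"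
      using hv[OF a] qc[OF a] lk[OF k] by simp
    then show "g (h k) = f k" using k by simp
  qed
  have hm: "h (k \<otimes>\<^bsub>K\<^esub> k') = h k \<otimes>\<^bsub>L\<^esub> h k'" if k: "k \<in> carrier K" and k': "k' \<in> carrier K" for k k'
  proof -
    obtain l where l: "l \<in> carrier L" "g l = f k" using ex_l[OF k] by blast
    obtain l' where l': "l' \<in> carrier L" "g l' = f k'" using ex_l[OF k'] by blast
    have a: "(k,l) \<in> carrier AA" and a': "(k',l') \<in> carrier AA" using k k' l l' by auto
    define c where "c = q (k',l')"
    have c: "c \<in> carrier L" "g c = \<one>\<^bsub>M\<^esub>" using qc[OF a'] c_def by auto
    have alc: "(k, l \<otimes>\<^bsub>L\<^esub> c) \<in> carrier AA" using k l c by simp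
    have aa': "(k \<otimes>\<^bsub>K\<^esub> k', l \<otimes>\<^bsub>L\<^esub> l') \<in> carrier AA" using k k' l l' by simp
    have "q (k \<otimes>\<^bsub>K\<^esub> k', l \<otimes>\<^bsub>L\<^esub> l') = q ((k,l) \<otimes>\<^bsub>AA\<^esub> (k',l'))" by simp
    also have "\<dots> = q ((k,l) \<otimes>\<^bsub>AA\<^esub> iota_fp K (q (k',l')))" by (rule Z_props(4)[OF q a a'])
    also have "\<dots> = q (k, l \<otimes>\<^bsub>L\<^esub> c)" using k by (simp add: c_def)
    finally have e1: "q (k \<otimes>\<^bsub>K\<^esub> k', l \<otimes>\<^bsub>L\<^esub> l') = q (k, l \<otimes>\<^bsub>L\<^esub> c)" .
    have hk: "h k = inv\<^bsub>L\<^esub> (q (k, l \<otimes>\<^bsub>L\<^esub> c)) \<otimes>\<^bsub>L\<^esub> (l \<otimes>\<^bsub>L\<^esub> c)" by (rule hv[OF alc])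
    have qlc: "q (k, l \<otimes>\<^bsub>L\<^esub> c) \<in> carrier L" using qc[OF alc] by simp
    have iq: "inv\<^bsub>L\<^esub> (q (k, l \<otimes>\<^bsub>L\<^esub> c)) = h k \<otimes>\<^bsub>L\<^esub> inv\<^bsub>L\<^esub> (l \<otimes>\<^bsub>L\<^esub> c)"
      using hk qlc l c by (simp add: L.m_assoc)
    have "h (k \<otimes>\<^bsub>K\<^esub> k') = inv\<^bsub>L\<^esub> (q (k, l \<otimes>\<^bsub>L\<^esub> c)) \<otimes>\<^bsub>L\<^esub> (l \<otimes>\<^bsub>L\<^esub> l')"
      using hv[OF aa'] e1 by simp
    also have "\<dots> = h k \<otimes>\<^bsub>L\<^esub> (inv\<^bsub>L\<^esub> c \<otimes>\<^bsub>L\<^esub> l')"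
    proof -
      have x: "inv\<^bsub>L\<^esub> l \<otimes>\<^bsub>L\<^esub> (l \<otimes>\<^bsub>L\<^esub> l') = l'" using l l'
        by (simp add: L.m_assoc[symmetric])
      show ?thesis unfolding iq using hL(1)[OF k] l l' c x by (simp add: L.m_assoc L.inv_mult_group)
    qed
    also have "inv\<^bsub>L\<^esub> c \<otimes>\<^bsub>L\<^esub> l' = h k'" using hv[OF a'] c_def by simp
    finally show ?thesis .
  qed
  have hH: "h \<in> Hom_fg K L f g"
    unfolding Hom_fg_def hom_def using hL hm by (auto simp: h_def)
  have "q_of K L M f g h = q"
  proof (rule extensionalityI)
    show "q_of K L M f g h \<in> extensional (carrier AA)" by (simp add: q_of_def del: A_carrier)
    show "q \<in> extensional (carrier AA)" using Z_props(2)[OF q] by (auto simp: extensional_def simp del: A_carrier)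
    fix p assume p: "p \<in> carrier AA"
    obtain k l where kl: "p = (k,l)" by (cases p)
    have a: "(k,l) \<in> carrier AA" using p kl by simp
    have "q_of K L M f g h (k,l) = l \<otimes>\<^bsub>L\<^esub> inv\<^bsub>L\<^esub> (inv\<^bsub>L\<^esub> (q (k,l)) \<otimes>\<^bsub>L\<^esub> l)"
      using q_val[OF a] hv[OF a] by simp
    also have "\<dots> = q (k,l)" using qc[OF a] a by (simp add: L.inv_mult_group L.m_assoc)
    finally show "q_of K L M f g h p = q p" using kl by simp
  qed
  then show ?thesis using hH by blast
qed


lemma corr:
  assumes h: "h \<in> Hom_fg K L f g" and h': "h' \<in> Hom_fg K L f g"
  shows "(h, h') \<in> conj_rel K L M f g \<longleftrightarrow>
     (q_of K L M f g h, q_of K L M f g h') \<in> desc_rel AA BB (iota_fp K)"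
proof
  assume "(h, h') \<in> conj_rel K L M f g"
  then obtain l0 where l0: "l0 \<in> carrier L" "g l0 = \<one>\<^bsub>M\<^esub>"
    and hh: "h' = (\<lambda>k\<in>carrier K. l0 \<otimes>\<^bsub>L\<^esub> h k \<otimes>\<^bsub>L\<^esub> inv\<^bsub>L\<^esub> l0)"
    unfolding conj_rel_def by auto
  have b0: "inv\<^bsub>L\<^esub> l0 \<in> carrier BB" using l0 by simp
  have "\<forall>a\<in>carrier AA. q_of K L M f g h a \<otimes>\<^bsub>BB\<^esub> inv\<^bsub>L\<^esub> l0
      = q_of K L M f g h' (a \<otimes>\<^bsub>AA\<^esub> iota_fp K (inv\<^bsub>L\<^esub> l0))"
  proof
    fix a assume a: "a \<in> carrier AA"
    obtain k l where kl: "a = (k,l)" by (cases a)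
    have k: "k \<in> carrier K" and l: "l \<in> carrier L" and e: "f k = g l" using a kl by auto
    have hk: "h k \<in> carrier L" by (rule hom_props(1)[OF h k])
    have a2: "(k, l \<otimes>\<^bsub>L\<^esub> inv\<^bsub>L\<^esub> l0) \<in> carrier AA" using k l l0 e by simp
    have m: "a \<otimes>\<^bsub>AA\<^esub> iota_fp K (inv\<^bsub>L\<^esub> l0) = (k, l \<otimes>\<^bsub>L\<^esub> inv\<^bsub>L\<^esub> l0)" using kl k by simp
    show "q_of K L M f g h a \<otimes>\<^bsub>BB\<^esub> inv\<^bsub>L\<^esub> l0
      = q_of K L M f g h' (a \<otimes>\<^bsub>AA\<^esub> iota_fp K (inv\<^bsub>L\<^esub> l0))"
      unfolding m unfolding kl q_val[OF a2] q_val[OF a[unfolded kl]] using hh k hk l l0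
      by (simp add: L.m_assoc L.inv_mult_group)
  qed
  then show "(q_of K L M f g h, q_of K L M f g h') \<in> desc_rel AA BB (iota_fp K)"
    unfolding desc_rel_def using q_in_Z[OF h] q_in_Z[OF h'] b0 by blast
next
  assume "(q_of K L M f g h, q_of K L M f g h') \<in> desc_rel AA BB (iota_fp K)"
  then obtain b0 where b0: "b0 \<in> carrier BB"
    and eq: "\<forall>a\<in>carrier AA. q_of K L M f g h a \<otimes>\<^bsub>BB\<^esub> b0 = q_of K L M f g h' (a \<otimes>\<^bsub>AA\<^esub> iota_fp K b0)"
    unfolding desc_rel_def by blast
  have b0L: "b0 \<in> carrier L" "g b0 = \<one>\<^bsub>M\<^esub>" using b0 by auto
  have l0: "inv\<^bsub>L\<^esub> b0 \<in> kernel L M g" using b0L by simp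
  have "h' = (\<lambda>k\<in>carrier K. inv\<^bsub>L\<^esub> b0 \<otimes>\<^bsub>L\<^esub> h k \<otimes>\<^bsub>L\<^esub> inv\<^bsub>L\<^esub> (inv\<^bsub>L\<^esub> b0))"
  proof (rule extensionalityI[OF hom_props(4)[OF h']])
    show "(\<lambda>k\<in>carrier K. inv\<^bsub>L\<^esub> b0 \<otimes>\<^bsub>L\<^esub> h k \<otimes>\<^bsub>L\<^esub> inv\<^bsub>L\<^esub> (inv\<^bsub>L\<^esub> b0)) \<in> extensional (carrier K)" by simp
    fix k assume k: "k \<in> carrier K"
    obtain l where l: "l \<in> carrier L" "g l = f k" using ex_l[OF k] by blast
    have a: "(k,l) \<in> carrier AA" using k l by simp
    have a2: "(k, l \<otimes>\<^bsub>L\<^esub> b0) \<in> carrier AA" using k l b0L by simp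
    have hk: "h k \<in> carrier L" "h' k \<in> carrier L" using hom_props(1)[OF h k] hom_props(1)[OF h' k] by auto
    have "l \<otimes>\<^bsub>L\<^esub> inv\<^bsub>L\<^esub> (h k) \<otimes>\<^bsub>L\<^esub> b0 = (l \<otimes>\<^bsub>L\<^esub> b0) \<otimes>\<^bsub>L\<^esub> inv\<^bsub>L\<^esub> (h' k)"
      using eq[rule_format, OF a] k unfolding q_val[OF a] by (simp add: q_val[OF a2])
    then have "l \<otimes>\<^bsub>L\<^esub> (inv\<^bsub>L\<^esub> (h k) \<otimes>\<^bsub>L\<^esub> b0) = l \<otimes>\<^bsub>L\<^esub> (b0 \<otimes>\<^bsub>L\<^esub> inv\<^bsub>L\<^esub> (h' k))"
      using l hk b0L by (simp add: L.m_assoc)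
    then have e2: "inv\<^bsub>L\<^esub> (h k) \<otimes>\<^bsub>L\<^esub> b0 = b0 \<otimes>\<^bsub>L\<^esub> inv\<^bsub>L\<^esub> (h' k)"
      by (rule L.l_cancel[OF _ _ _ l(1)]) (use hk b0L in auto)
    have "inv\<^bsub>L\<^esub> b0 \<otimes>\<^bsub>L\<^esub> (inv\<^bsub>L\<^esub> (h k) \<otimes>\<^bsub>L\<^esub> b0) = inv\<^bsub>L\<^esub> (h' k)"
      unfolding e2 using hk b0L by simp
    then have "inv\<^bsub>L\<^esub> (inv\<^bsub>L\<^esub> b0 \<otimes>\<^bsub>L\<^esub> (inv\<^bsub>L\<^esub> (h k) \<otimes>\<^bsub>L\<^esub> b0)) = h' k"
      using hk by simp
    then show "h' k = (\<lambda>k\<in>carrier K. inv\<^bsub>L\<^esub> b0 \<otimes>\<^bsub>L\<^esub> h k \<otimes>\<^bsub>L\<^esub> inv\<^bsub>L\<^esub> (inv\<^bsub>L\<^esub> b0)) k"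
      using k hk b0L by (simp add: L.inv_mult_group L.m_assoc)
  qed
  then show "(h, h') \<in> conj_rel K L M f g"
    unfolding conj_rel_def using h h' l0 by blast
qed

lemma conj_equiv: "equiv (Hom_fg K L f g) (conj_rel K L M f g)"
proof (rule equivI)
  show "conj_rel K L M f g \<subseteq> Hom_fg K L f g \<times> Hom_fg K L f g" unfolding conj_rel_def by auto
  show "refl_on (Hom_fg K L f g) (conj_rel K L M f g)"
  proof (rule refl_onI)
    fix h assume h: "h \<in> Hom_fg K L f g"
    have "h = (\<lambda>k\<in>carrier K. \<one>\<^bsub>L\<^esub> \<otimes>\<^bsub>L\<^esub> h k \<otimes>\<^bsub>L\<^esub> inv\<^bsub>L\<^esub> \<one>\<^bsub>L\<^esub>)"
      by (rule extensionalityI[OF hom_props(4)[OF h]]) (auto simp: hom_props(1)[OF h])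
    then show "(h,h) \<in> conj_rel K L M f g" unfolding conj_rel_def using h
      by (auto intro!: bexI[where x="\<one>\<^bsub>L\<^esub>"])
  qed
  show "sym (conj_rel K L M f g)"
  proof (rule symI)
    fix h h' assume "(h,h') \<in> conj_rel K L M f g"
    then obtain l0 where h: "h \<in> Hom_fg K L f g" and h': "h' \<in> Hom_fg K L f g"
      and l0: "l0 \<in> carrier L" "g l0 = \<one>\<^bsub>M\<^esub>"
      and hh: "h' = (\<lambda>k\<in>carrier K. l0 \<otimes>\<^bsub>L\<^esub> h k \<otimes>\<^bsub>L\<^esub> inv\<^bsub>L\<^esub> l0)"
      unfolding conj_rel_def by auto
    have "h = (\<lambda>k\<in>carrier K. inv\<^bsub>L\<^esub> l0 \<otimes>\<^bsub>L\<^esub> h' k \<otimes>\<^bsub>L\<^esub> inv\<^bsub>L\<^esub> (inv\<^bsub>L\<^esub> l0))"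
      by (rule extensionalityI[OF hom_props(4)[OF h]])
        (auto simp: hh hom_props(1)[OF h] l0 L.m_assoc)
    moreover have "inv\<^bsub>L\<^esub> l0 \<in> kernel L M g" using l0 by simp
    ultimately show "(h',h) \<in> conj_rel K L M f g" unfolding conj_rel_def using h h' by blast
  qed
  show "trans (conj_rel K L M f g)"
  proof (rule transI)
    fix h h' h'' assume "(h,h') \<in> conj_rel K L M f g" "(h',h'') \<in> conj_rel K L M f g"
    then obtain l0 l1 where h: "h \<in> Hom_fg K L f g" and h'': "h'' \<in> Hom_fg K L f g"
      and l0: "l0 \<in> carrier L" "g l0 = \<one>\<^bsub>M\<^esub>"
      and hh: "h' = (\<lambda>k\<in>carrier K. l0 \<otimes>\<^bsub>L\<^esub> h k \<otimes>\<^bsub>L\<^esub> inv\<^bsub>L\<^esub> l0)"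
      and l1: "l1 \<in> carrier L" "g l1 = \<one>\<^bsub>M\<^esub>"
      and hh': "h'' = (\<lambda>k\<in>carrier K. l1 \<otimes>\<^bsub>L\<^esub> h' k \<otimes>\<^bsub>L\<^esub> inv\<^bsub>L\<^esub> l1)"
      unfolding conj_rel_def by auto
    have "h'' = (\<lambda>k\<in>carrier K. (l1 \<otimes>\<^bsub>L\<^esub> l0) \<otimes>\<^bsub>L\<^esub> h k \<otimes>\<^bsub>L\<^esub> inv\<^bsub>L\<^esub> (l1 \<otimes>\<^bsub>L\<^esub> l0))"
      by (rule extensionalityI[OF hom_props(4)[OF h'']])
        (auto simp: hh' hh hom_props(1)[OF h] l0 l1 L.m_assoc L.inv_mult_group)
    moreover have "l1 \<otimes>\<^bsub>L\<^esub> l0 \<in> kernel L M g" using l0 l1 by simp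
    ultimately show "(h,h'') \<in> conj_rel K L M f g" unfolding conj_rel_def using h h'' by blast
  qed
qed

lemma desc_sub: "desc_rel AA BB (iota_fp K) \<subseteq> Z1 AA BB (iota_fp K) \<times> Z1 AA BB (iota_fp K)"
  unfolding desc_rel_def by auto

end

theorem mainTheorem19:
  fixes K :: "('k,'x) monoid_scheme" and L :: "('l,'y) monoid_scheme"
    and M :: "('m,'z) monoid_scheme"
    and f :: "'k \<Rightarrow> 'm" and g :: "'l \<Rightarrow> 'm"
  assumes "group K" and "group L" and "group M"
    and "f \<in> hom K M" and "g \<in> hom L M"
    and "f ` carrier K \<subseteq> g ` carrier L"
  shows "bij_betw (q_of K L M f g) (Hom_fg K L f g)
           (Z1 (fibre_prod K L M f g) (ker_group L M g) (iota_fp K))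
       \<and> (\<forall>h\<in>Hom_fg K L f g. \<forall>h'\<in>Hom_fg K L f g.
            (h, h') \<in> conj_rel K L M f g \<longleftrightarrow>
            (q_of K L M f g h, q_of K L M f g h')
              \<in> desc_rel (fibre_prod K L M f g) (ker_group L M g) (iota_fp K))
       \<and> bij_betw
           (\<lambda>C. Image (desc_rel (fibre_prod K L M f g) (ker_group L M g) (iota_fp K))
                  (q_of K L M f g ` C))
           (Hom_bar K L M f g)
           (Desc1 (fibre_prod K L M f g) (ker_group L M g) (iota_fp K))"
proof -
  interpret fp: fpctx K L M f g by (simp add: fpctx_def fpctx_axioms_def assms)
  have b1: "bij_betw (q_of K L M f g) (Hom_fg K L f g)
           (Z1 (fibre_prod K L M f g) (ker_group L M g) (iota_fp K))"
    unfolding bij_betw_def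
  proof
    show "inj_on (q_of K L M f g) (Hom_fg K L f g)" by (rule fp.q_inj)
    show "q_of K L M f g ` Hom_fg K L f g = Z1 (fibre_prod K L M f g) (ker_group L M g) (iota_fp K)"
      using fp.q_in_Z fp.q_surj by blast
  qed
  have c: "\<forall>h\<in>Hom_fg K L f g. \<forall>h'\<in>Hom_fg K L f g.
            (h, h') \<in> conj_rel K L M f g \<longleftrightarrow>
            (q_of K L M f g h, q_of K L M f g h')
              \<in> desc_rel (fibre_prod K L M f g) (ker_group L M g) (iota_fp K)"
    using fp.corr by blast
  have b3: "bij_betw
           (\<lambda>C. Image (desc_rel (fibre_prod K L M f g) (ker_group L M g) (iota_fp K))
                  (q_of K L M f g ` C))
           (Hom_bar K L M f g)
           (Desc1 (fibre_prod K L M f g) (ker_group L M g) (iota_fp K))"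
    unfolding Hom_bar_def Desc1_def
    by (rule quot_bij[OF b1 fp.conj_equiv fp.desc_sub c])
  show ?thesis using b1 c b3 by blast
qed

end
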